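(* Let $0\le r\le n$, let $f$ be an $r$-truncated subexceedant function on $[n-r]$, choose an admissible placement of block-ends, and let $A\in\mathcal{A}_{n+1,r+1}$ be the resulting assemblée produced by the insertion algorithm described below. Let $w_\alpha=\#\{i\in[n-r]: f(i)=i+r+1\}$ (the number of inserted elements given weight $\alpha^{-1}$) and $w_\beta=\#\{i\in[n-r]: f(i)=1\}$ (the number of inserted elements given weight $\beta^{-1}$). Then $|\mathrm{lrs}(\rho(A))|=w_\alpha$ and $|\mathrm{rls}(\rho(A))|=w_\beta$.
   Context: An assemblée of size $(m,s)$ is a collection of $s$ nonempty, pairwise disjoint, linearly ordered sets (blocks) whose union is $\{1,\dots,m\}$; the last element of a block is its block-end. Blocks are listed in the canonical order in which block-ends decrease from left to right, and the assemblée is identified with the word obtained by concatenating its blocks ("left/right in $A$" refers to this word). $\mathcal{A}_{m,s}$ is the set of assemblées of size $(m,s)$. For $A\in\mathcal{A}_{n+1,r+1}$ with block-ends $b_1>\dots>b_{r+1}$: $\mathrm{lrs}(A)$ is the set of elements $x>b_1$ of $A$ larger than every element $y>b_1$ to the right of $x$ in $A$; $\mathrm{rls}(A)$ is the set of elements $x<b_{r+1}$ of $A$ larger than every element $y<b_{r+1}$ to the left of $x$ in $A$. An $r$-truncated subexceedant function on $[n-r]=\{1,\dots,n-r\}$ is a function $f:[n-r]\to\mathbb{Z}_{>0}$ with $f(i)\le i+r+1$ for all $i$. Insertion algorithm. Start with $r+1$ "green" markers $g_1,\dots,g_{r+1}$ arranged vertically (in a linear "height" order, $g_1$ on top). For $i=1,\dots,n-r$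 insert a new element $x_i$, placed horizontally to the right of $x_{i-1}$, into the current height order (which contains the $r+1$ green markers and $x_1,\dots,x_{i-1}$, i.e. $i+r$ items) at position $f(i)$ counted from the bottom: $f(i)=1$ means below all current items, $f(i)=k$ means directly above the $(k-1)$-st item from the bottom (so $f(i)=i+r+1$ means above all current items). At the end, every one of the $n+1$ items receives as value its rank in the height order (from $1$ at the bottom to $n+1$ at the top); write $x_i$ also for the value of $x_i$ and $b_1>\dots>b_{r+1}$ for the values of $g_1,\dots,g_{r+1}$. An admissible placement of block-ends is a way of merging the sequence $x_1,\dots,x_{n-r}$ with the sequence $b_1,\dots,b_{r+1}$ (keeping both orders) such that $b_{r+1}$ is the last letter; there are $\binom{n}{r}$ of them. Cutting the merged word after each $b_i$ gives an assemblée $A\in\mathcal{A}_{n+1,r+1}$ with block-ends $b_1,\dots,b_{r+1}$. The inserted element $x_i$ is given weight $\beta^{-1}$ if $f(i)=1$, weight $\alpha^{-1}$ if $f(i)=i+r+1$, and weight $1$ otherwise. The map $\rho$. For $A\in\mathcal{A}_{n+1,r+1}$ with block-ends $b_1>\dots>b_{r+1}$, let $[a_1,\dots,a_u]$ be the elements of $A$ greater than $b_1$, listed in their order of appearance in $A$ from left to right, and $[c_1,\dots,c_w]$ the elements smaller than $b_{r+1}$, in their order of appearance. $\rho(A)$ is the word obtained from $A$ by replacing $a_i$ (in its position) by $a_{u-i+1}$ for each $i$, replacing $c_i$ by $b_{r+1}-c_i$ for each $i$, and leaving all other entries unchanged; it is again an assemblée in $\mathcal{A}_{n+1,r+1}$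 with the same block-ends. *)

theory Defs
  imports Main
begin

definition assemblee :: "nat \<Rightarrow> nat \<Rightarrow> nat list list \<Rightarrow> bool" where
  "assemblee m s A \<longleftrightarrow> length A = s \<and> (\<forall>B\<in>set A. B \<noteq> []) \<and>
     distinct (concat A) \<and> set (concat A) = {1..m} \<and>
     sorted_wrt (\<lambda>x y. x > y) (map last A)"

text \<open>b_1 = first (largest) block-end, b_{r+1} = last (smallest) block-end.\<close>
definition first_end :: "nat list list \<Rightarrow> nat" where
  "first_end A = last (hd A)"
definition last_end :: "nat list list \<Rightarrow> nat" where
  "last_end A = last (last A)"

definition lrs :: "nat list list \<Rightarrow> nat set" where
  "lrs A = (let w = concat A; b = first_end A in
     {w ! k | k. k < length w \<and> b < w ! k \<and>
        (\<forall>j. k < j \<and> j < length w \<and> b < w ! j \<longrightarrow> w ! j < w ! k)})"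

definition rls :: "nat list list \<Rightarrow> nat set" where
  "rls A = (let w = concat A; b = last_end A in
     {w ! k | k. k < length w \<and> w ! k < b \<and>
        (\<forall>j. j < k \<and> w ! j < b \<longrightarrow> w ! j < w ! k)})"

fun rho_word :: "nat list \<Rightarrow> nat \<Rightarrow> nat \<Rightarrow> nat list \<Rightarrow> nat list" where
  "rho_word ra b1 br [] = []"
| "rho_word ra b1 br (x # xs) =
     (if b1 < x then hd ra # rho_word (tl ra) b1 br xs
      else if x < br then (br - x) # rho_word ra b1 br xs
      else x # rho_word ra b1 br xs)"

fun split_lens :: "nat list \<Rightarrow> 'a list \<Rightarrow> 'a list list" where
  "split_lens [] w = []"
| "split_lens (l # ls) w = take l w # split_lens ls (drop l w)"

definition rho :: "nat list list \<Rightarrow> nat list list" where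
  "rho A = (let w = concat A; b1 = first_end A; br = last_end A in
     split_lens (map length A)
       (rho_word (rev (filter (\<lambda>x. b1 < x) w)) b1 br w))"

definition trunc_subexc :: "nat \<Rightarrow> nat \<Rightarrow> (nat \<Rightarrow> nat) \<Rightarrow> bool" where
  "trunc_subexc n r f \<longleftrightarrow> (\<forall>i\<in>{1..n-r}. 0 < f i \<and> f i \<le> i + r + 1)"

text \<open>Items: green markers G j (j = 1..r+1) and inserted elements X i.\<close>
datatype item = G nat | X nat

definition insert_at :: "nat \<Rightarrow> 'a \<Rightarrow> 'a list \<Rightarrow> 'a list" where
  "insert_at k x xs = take k xs @ x # drop k xs"

text \<open>Height order, listed from bottom to top. Initially g_{r+1},...,g_1
  (g_1 on top); x_i is inserted at position f(i) counted from the bottom.\<close>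
definition height_order :: "nat \<Rightarrow> nat \<Rightarrow> (nat \<Rightarrow> nat) \<Rightarrow> item list" where
  "height_order n r f =
     fold (\<lambda>i hs. insert_at (f i - 1) (X i) hs) [1..<n-r+1] (rev (map G [1..<r+2]))"

fun idx :: "'a list \<Rightarrow> 'a \<Rightarrow> nat" where
  "idx [] a = 0"
| "idx (x # xs) a = (if x = a then 0 else Suc (idx xs a))"

definition item_val :: "nat \<Rightarrow> nat \<Rightarrow> (nat \<Rightarrow> nat) \<Rightarrow> item \<Rightarrow> nat" where
  "item_val n r f it = idx (height_order n r f) it + 1"

definition is_G :: "item \<Rightarrow> bool" where
  "is_G it = (case it of G _ \<Rightarrow> True | X _ \<Rightarrow> False)"
definition is_X :: "item \<Rightarrow> bool" where
  "is_X it = (case it of G _ \<Rightarrow> False | X _ \<Rightarrow> True)"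

definition admissible :: "nat \<Rightarrow> nat \<Rightarrow> item list \<Rightarrow> bool" where
  "admissible n r w \<longleftrightarrow> filter is_X w = map X [1..<n-r+1] \<and>
     filter is_G w = map G [1..<r+2] \<and> w \<noteq> [] \<and> last w = G (r+1)"

fun cut_blocks :: "'a list \<Rightarrow> ('a \<Rightarrow> bool) \<Rightarrow> 'a list \<Rightarrow> 'a list list" where
  "cut_blocks acc P [] = (if acc = [] then [] else [acc])"
| "cut_blocks acc P (y # ys) =
     (if P y then (acc @ [y]) # cut_blocks [] P ys else cut_blocks (acc @ [y]) P ys)"

definition insertion_assemblee :: "nat \<Rightarrow> nat \<Rightarrow> (nat \<Rightarrow> nat) \<Rightarrow> item list \<Rightarrow> nat list list" where
  "insertion_assemblee n r f w = map (map (item_val n r f)) (cut_blocks [] is_G w)"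

end

theory Submission
  imports Defs
begin

definition ltr :: "('a \<Rightarrow> 'a \<Rightarrow> bool) \<Rightarrow> ('a \<Rightarrow> bool) \<Rightarrow> 'a list \<Rightarrow> 'a set" where
  "ltr R P ys = {ys!k | k. k < length ys \<and> P (ys!k) \<and> (\<forall>j. j < k \<and> P (ys!j) \<longrightarrow> R (ys!j) (ys!k))}"
definition rtl :: "('a \<Rightarrow> 'a \<Rightarrow> bool) \<Rightarrow> ('a \<Rightarrow> bool) \<Rightarrow> 'a list \<Rightarrow> 'a set" where
  "rtl R P ys = {ys!k | k. k < length ys \<and> P (ys!k) \<and> (\<forall>j. k < j \<and> j < length ys \<and> P (ys!j) \<longrightarrow> R (ys!j) (ys!k))}"

lemma ltr_mem: "x \<in> ltr R P ys \<longleftrightarrow> (\<exists>k<length ys. x = ys!k \<and> P (ys!k) \<and> (\<forall>j<k. P (ys!j) \<longrightarrow> R (ys!j) (ys!k)))"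
  unfolding ltr_def by blast
lemma rtl_mem: "x \<in> rtl R P ys \<longleftrightarrow> (\<exists>k<length ys. x = ys!k \<and> P (ys!k) \<and> (\<forall>j<length ys. k < j \<longrightarrow> P (ys!j) \<longrightarrow> R (ys!j) (ys!k)))"
  unfolding rtl_def by blast

lemma ltr_Nil[simp]: "ltr R P [] = {}" by (simp add: ltr_def)
lemma rtl_Nil[simp]: "rtl R P [] = {}" by (simp add: rtl_def)

lemma ltr_Cons: "ltr R P (y # ys) = (if P y then insert y {z \<in> ltr R P ys. R y z} else ltr R P ys)"
  by (rule set_eqI) (auto simp: ltr_mem Ex_less_Suc2 All_less_Suc2)

lemma rtl_Cons: "rtl R P (y # ys) = (if P y \<and> (\<forall>z\<in>set ys. P z \<longrightarrow> R z y) then insert y (rtl R P ys) else rtl R P ys)"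
  apply (rule set_eqI)
  apply (auto simp: rtl_mem Ex_less_Suc2 All_less_Suc2 in_set_conv_nth)
  using nth_mem by blast

lemma ltr_subset: "ltr R P ys \<subseteq> set ys"
  by (auto simp: ltr_mem)

lemma ltr_filter: "ltr R P (filter P ys) = ltr R P ys"
  by (induction ys) (auto simp: ltr_Cons)

lemma rtl_filter: "rtl R P (filter P ys) = rtl R P ys"
  by (induction ys) (auto simp: rtl_Cons)

lemma ltr_map: "ltr R P (map h ys) = h ` ltr (\<lambda>a b. R (h a) (h b)) (\<lambda>a. P (h a)) ys"
  by (induction ys) (auto simp: ltr_Cons)

lemma ltr_cong: "(\<And>x. x \<in> set ys \<Longrightarrow> P x = P' x) \<Longrightarrow> (\<And>x y. x \<in> set ys \<Longrightarrow> y \<in> set ys \<Longrightarrow> R x y = R' x y)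
  \<Longrightarrow> ltr R P ys = ltr R' P' ys"
proof (induction ys)
  case Nil then show ?case by simp
next
  case (Cons a ys)
  have "ltr R P ys = ltr R' P' ys" using Cons by simp
  moreover have "ltr R' P' ys \<subseteq> set ys" by (rule ltr_subset)
  ultimately show ?case using Cons.prems by (auto simp: ltr_Cons)
qed

lemma ex_less_Suc': "(\<exists>k<Suc n. Q k) = (Q n \<or> (\<exists>k<n. Q k))"
  by (auto simp: less_Suc_eq)
lemma all_less_Suc': "(\<forall>k<Suc n. Q k) = (Q n \<and> (\<forall>k<n. Q k))"
  by (auto simp: less_Suc_eq)

lemma ltr_snoc: "ltr R P (ys @ [y]) = (if P y \<and> (\<forall>z\<in>set ys. P z \<longrightarrow> R z y) then insert y (ltr R P ys) else ltr R P ys)"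
proof -
  have e: "\<And>k. k < length ys \<Longrightarrow> (ys @ [y]) ! k = ys ! k" by (simp add: nth_append)
  have "x \<in> ltr R P (ys @ [y]) \<longleftrightarrow> (x = y \<and> P y \<and> (\<forall>j<length ys. P (ys!j) \<longrightarrow> R (ys!j) y)) \<or> x \<in> ltr R P ys" for x
    unfolding ltr_mem length_append_singleton ex_less_Suc'
    by (auto simp: e)
  then show ?thesis by (auto simp: all_set_conv_all_nth)
qed

lemma rtl_snoc: "rtl R P (ys @ [y]) = (if P y then insert y {z \<in> rtl R P ys. R y z} else rtl R P ys)"
proof -
  have e: "\<And>k. k < length ys \<Longrightarrow> (ys @ [y]) ! k = ys ! k" by (simp add: nth_append)
  have "x \<in> rtl R P (ys @ [y]) \<longleftrightarrow> (x = y \<and> P y) \<or> (x \<in> rtl R P ys \<and> (P y \<longrightarrow> R y x))" for x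
    unfolding rtl_mem length_append_singleton ex_less_Suc' all_less_Suc'
    by (auto simp: e)
  then show ?thesis by auto
qed

lemma rtl_rev: "rtl R P (rev ys) = ltr R P ys"
  by (induction ys) (auto simp: rtl_snoc ltr_Cons)


lemma cb_concat: "concat (cut_blocks acc P ys) = acc @ ys"
  by (induction ys arbitrary: acc) auto
lemma cb_nonempty: "\<forall>b\<in>set (cut_blocks acc P ys). b \<noteq> []"
  by (induction ys arbitrary: acc) auto
lemma cb_ne: "acc \<noteq> [] \<or> ys \<noteq> [] \<Longrightarrow> cut_blocks acc P ys \<noteq> []"
  by (induction ys arbitrary: acc) auto
lemma cb_hd: "\<exists>y\<in>set ys. P y \<Longrightarrow> last (hd (cut_blocks acc P ys)) = hd (filter P ys)"
  by (induction ys arbitrary: acc) auto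
lemma cb_last: "ys \<noteq> [] \<Longrightarrow> P (last ys) \<Longrightarrow> last (last (cut_blocks acc P ys)) = last ys"
proof (induction ys arbitrary: acc)
  case Nil then show ?case by simp
next
  case (Cons y ys)
  show ?case
  proof (cases "ys = []")
    case True then show ?thesis using Cons by simp
  next
    case False
    then have "cut_blocks [] P ys \<noteq> []" "cut_blocks (acc @ [y]) P ys \<noteq> []"
      using cb_ne[of "[]" ys P] cb_ne[of "acc@[y]" ys P] by auto
    then show ?thesis using Cons False by auto
  qed
qed

lemma sl_concat: "length xs = sum_list ls \<Longrightarrow> concat (split_lens ls xs) = xs"
  by (induction ls arbitrary: xs) auto
lemma sl_lens: "length xs = sum_list ls \<Longrightarrow> map length (split_lens ls xs) = ls"
  by (induction ls arbitrary: xs) auto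

lemma rw_length: "length (rho_word ra b1 br xs) = length xs"
  by (induction xs arbitrary: ra) auto

lemma rw_big: "length ra = length (filter (\<lambda>x. b1 < x) xs) \<Longrightarrow> \<forall>z\<in>set ra. b1 < z \<Longrightarrow> br \<le> b1 \<Longrightarrow>
   filter (\<lambda>x. b1 < x) (rho_word ra b1 br xs) = ra"
  by (induction xs arbitrary: ra) (auto simp: length_Suc_conv)

lemma rw_small: "length ra = length (filter (\<lambda>x. b1 < x) xs) \<Longrightarrow> \<forall>z\<in>set ra. b1 < z \<Longrightarrow> br \<le> b1 \<Longrightarrow>
   0 \<notin> set xs \<Longrightarrow>
   filter (\<lambda>x. x < br) (rho_word ra b1 br xs) = map (\<lambda>x. br - x) (filter (\<lambda>x. x < br) xs)"
  by (induction xs arbitrary: ra) (auto simp: length_Suc_conv)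

lemma rw_nth: "k < length xs \<Longrightarrow> \<not> b1 < xs ! k \<Longrightarrow> \<not> xs ! k < br \<Longrightarrow> rho_word ra b1 br xs ! k = xs ! k"
  by (induction xs arbitrary: ra k) (auto simp: nth_Cons split: nat.splits)

lemma last_hd_concat: "B \<noteq> [] \<Longrightarrow> hd B \<noteq> [] \<Longrightarrow> last (hd B) = concat B ! (length (hd B) - 1)"
  by (cases B) (auto simp: nth_append last_conv_nth)
lemma last_last_concat: "B \<noteq> [] \<Longrightarrow> last B \<noteq> [] \<Longrightarrow> last (last B) = last (concat B)"
  by (induction B) (auto simp: last_append)

lemma idx_append: "idx (xs @ ys) a = (if a \<in> set xs then idx xs a else length xs + idx ys a)"
  by (induction xs) auto
lemma idx_less: "a \<in> set xs \<Longrightarrow> idx xs a < length xs"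
  by (induction xs) auto
lemma nth_idx: "a \<in> set xs \<Longrightarrow> xs ! idx xs a = a"
  by (induction xs) auto
lemma idx_nth: "distinct xs \<Longrightarrow> k < length xs \<Longrightarrow> idx xs (xs ! k) = k"
  by (induction xs arbitrary: k) (auto simp: nth_Cons split: nat.splits)
lemma idx_inj: "a \<in> set xs \<Longrightarrow> b \<in> set xs \<Longrightarrow> idx xs a = idx xs b \<Longrightarrow> a = b"
  by (metis nth_idx)

lemma ins_set: "set (insert_at p x xs) = insert x (set xs)"
  unfolding insert_at_def by (metis Un_insert_right append_take_drop_id list.simps(15) set_append)
lemma ins_length: "length (insert_at p x xs) = Suc (length xs)"
  unfolding insert_at_def by simp
lemma ins_distinct: "distinct xs \<Longrightarrow> x \<notin> set xs \<Longrightarrow> distinct (insert_at p x xs)"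
proof -
  assume d: "distinct xs" and x: "x \<notin> set xs"
  have "distinct (take p xs @ drop p xs)" using d by simp
  then show ?thesis unfolding insert_at_def using x
    by (auto simp del: append_take_drop_id dest: in_set_takeD in_set_dropD)
qed
lemma ins_idx_new: "x \<notin> set xs \<Longrightarrow> p \<le> length xs \<Longrightarrow> idx (insert_at p x xs) x = p"
  unfolding insert_at_def by (auto simp: idx_append dest: in_set_takeD)
lemma ins_idx_old: "x \<notin> set xs \<Longrightarrow> p \<le> length xs \<Longrightarrow> a \<in> set xs \<Longrightarrow>
   idx (insert_at p x xs) a = (if idx xs a < p then idx xs a else Suc (idx xs a))"
proof -
  assume x: "x \<notin> set xs" and p: "p \<le> length xs" and a: "a \<in> set xs"
  have ax: "a \<noteq> x" using x a by auto
  have lt: "length (take p xs) = p" using p by simp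
  have e: "idx xs a = (if a \<in> set (take p xs) then idx (take p xs) a else p + idx (drop p xs) a)"
    using idx_append[of "take p xs" "drop p xs" a] lt by simp
  have e2: "idx (insert_at p x xs) a = (if a \<in> set (take p xs) then idx (take p xs) a else p + Suc (idx (drop p xs) a))"
    unfolding insert_at_def using idx_append[of "take p xs" "x # drop p xs" a] lt ax by simp
  show ?thesis
  proof (cases "a \<in> set (take p xs)")
    case True
    then have "idx (take p xs) a < p" using idx_less lt by metis
    then show ?thesis using e e2 True by simp
  next
    case False then show ?thesis using e e2 by simp
  qed
qed


definition hsk :: "nat \<Rightarrow> (nat \<Rightarrow> nat) \<Rightarrow> nat \<Rightarrow> item list" where
 "hsk r f k = fold (\<lambda>i hs. insert_at (f i - 1) (X i) hs) [1..<k+1] (rev (map G [1..<r+2]))"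

lemma hsk_0: "hsk r f 0 = rev (map G [1..<r+2])" by (simp add: hsk_def)
lemma hsk_Suc: "hsk r f (Suc k) = insert_at (f (Suc k) - 1) (X (Suc k)) (hsk r f k)"
  by (simp add: hsk_def)
lemma height_hsk: "height_order n r f = hsk r f (n - r)"
  by (simp add: hsk_def height_order_def)

lemma hsk_inv: "\<forall>i\<in>{1..k}. f i \<le> i + r + 1 \<Longrightarrow>
  distinct (hsk r f k) \<and> set (hsk r f k) = G ` {1..r+1} \<union> X ` {1..k} \<and> length (hsk r f k) = r + 1 + k"
proof (induction k)
  case 0
  have "{1..<r+2} = {1..r+1}" by auto
  then show ?case by (simp add: hsk_0 distinct_map inj_on_def del: upt_Suc)
next
  case (Suc k)
  then have IH: "distinct (hsk r f k)" "set (hsk r f k) = G ` {1..r+1} \<union> X ` {1..k}" "length (hsk r f k) = r + 1 + k"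
    by auto
  have nx: "X (Suc k) \<notin> set (hsk r f k)" using IH(2) by auto
  have "{1..Suc k} = insert (Suc k) {1..k}" by auto
  then show ?case using IH nx by (simp add: hsk_Suc ins_distinct ins_set ins_length)
qed

lemma hsk_order:
  assumes f: "\<forall>i\<in>{1..k'}. f i \<le> i + r + 1" and kk: "k \<le> k'"
    and a: "a \<in> set (hsk r f k)" and b: "b \<in> set (hsk r f k)"
  shows "(idx (hsk r f k') a < idx (hsk r f k') b) = (idx (hsk r f k) a < idx (hsk r f k) b)"
  using kk f
proof (induction k' rule: dec_induct)
  case base then show ?case by simp
next
  case (step k2)
  have f2: "\<forall>i\<in>{1..k2}. f i \<le> i + r + 1" using step.prems by auto
  note inv = hsk_inv[OF f2]
  have fk: "\<forall>i\<in>{1..k}. f i \<le> i + r + 1" using f2 step.hyps by auto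
  have sub: "set (hsk r f k) \<subseteq> set (hsk r f k2)"
    using hsk_inv[OF fk] inv step.hyps by auto
  have nx: "X (Suc k2) \<notin> set (hsk r f k2)" using inv by auto
  have "Suc k2 \<in> {1..Suc k2}" by simp
  from bspec[OF step.prems this] have "f (Suc k2) \<le> Suc k2 + r + 1" by simp
  then have p: "f (Suc k2) - 1 \<le> length (hsk r f k2)" using inv by auto
  have ea: "idx (hsk r f (Suc k2)) a = (if idx (hsk r f k2) a < f (Suc k2) - 1 then idx (hsk r f k2) a else Suc (idx (hsk r f k2) a))"
    unfolding hsk_Suc using ins_idx_old[OF nx p] a sub by auto
  have eb: "idx (hsk r f (Suc k2)) b = (if idx (hsk r f k2) b < f (Suc k2) - 1 then idx (hsk r f k2) b else Suc (idx (hsk r f k2) b))"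
    unfolding hsk_Suc using ins_idx_old[OF nx p] b sub by auto
  have "(idx (hsk r f (Suc k2)) a < idx (hsk r f (Suc k2)) b) = (idx (hsk r f k2) a < idx (hsk r f k2) b)"
    unfolding ea eb by auto
  then show ?case using step.IH f2 by simp
qed

lemma idx_init: "j \<in> {1..r+1} \<Longrightarrow> idx (hsk r f 0) (G j) = r + 1 - j"
proof -
  assume j: "j \<in> {1..r+1}"
  have d: "distinct (hsk r f 0)" using hsk_inv[of 0 f r] by simp
  have jj: "1 \<le> j" "j \<le> r + 1" using j by auto
  have u: "[1..<r+2] ! (j-1) = j" "j - 1 < length [1..<r+2]" using jj by (simp_all del: upt_Suc)
  have "hsk r f 0 ! (r + 1 - j) = G j" using j u
    by (simp add: hsk_0 rev_nth del: upt_Suc)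
  moreover have "r + 1 - j < length (hsk r f 0)" using j by (simp add: hsk_0 del: upt_Suc)
  ultimately show ?thesis using idx_nth[OF d] by metis
qed


lemma stage_facts:
  assumes F: "\<forall>i\<in>{1..m}. 0 < f i \<and> f i \<le> i + r + 1" and i: "i \<in> {1..m}"
  defines "K \<equiv> hsk r f (i - 1)" and "K' \<equiv> hsk r f i" and "H \<equiv> hsk r f m"
  shows "distinct K" "set K = G ` {1..r+1} \<union> X ` {1..i-1}" "length K = r + i"
    "idx K' (X i) = f i - 1" "f i - 1 \<le> length K"
    "\<And>a. a \<in> set K \<Longrightarrow> idx K' a = (if idx K a < f i - 1 then idx K a else Suc (idx K a))"
    "\<And>a b. a \<in> set K' \<Longrightarrow> b \<in> set K' \<Longrightarrow> (idx H a < idx H b) = (idx K' a < idx K' b)"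
    "set K' = insert (X i) (set K)"
proof -
  have Fm: "\<forall>i\<in>{1..m}. f i \<le> i + r + 1" using F by auto
  have Fi: "\<forall>j\<in>{1..i-1}. f j \<le> j + r + 1" using Fm i by auto
  note inv = hsk_inv[OF Fi]
  show "distinct K" "set K = G ` {1..r+1} \<union> X ` {1..i-1}" "length K = r + i"
    using inv i unfolding K_def by auto
  obtain k where k: "i = Suc k" using i by (cases i) auto
  have KK: "K' = insert_at (f i - 1) (X i) K" unfolding K'_def K_def
    by (simp add: k hsk_Suc)
  have nx: "X i \<notin> set K" using inv unfolding K_def by auto
  have "f i \<le> i + r + 1" using Fm i by auto
  then show p: "f i - 1 \<le> length K" using inv i unfolding K_def by auto
  show "idx K' (X i) = f i - 1" unfolding KK using ins_idx_new[OF nx p] .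
  show "\<And>a. a \<in> set K \<Longrightarrow> idx K' a = (if idx K a < f i - 1 then idx K a else Suc (idx K a))"
    unfolding KK using ins_idx_old[OF nx p] by auto
  show "set K' = insert (X i) (set K)" unfolding KK by (simp add: ins_set)
  have Fm': "\<forall>j\<in>{1..m}. f j \<le> j + r + 1" using Fm .
  show "\<And>a b. a \<in> set K' \<Longrightarrow> b \<in> set K' \<Longrightarrow> (idx H a < idx H b) = (idx K' a < idx K' b)"
    unfolding H_def K'_def using hsk_order[OF Fm'] i by auto
qed

lemma G_bounds:
  assumes F: "\<forall>i\<in>{1..m}. 0 < f i \<and> f i \<le> i + r + 1" and j: "j \<in> {1..r+1}"
  shows "\<not> idx (hsk r f m) (G 1) < idx (hsk r f m) (G j)" "\<not> idx (hsk r f m) (G j) < idx (hsk r f m) (G (r+1))"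
proof -
  have Fm: "\<forall>i\<in>{1..m}. f i \<le> i + r + 1" using F by auto
  have s: "set (hsk r f 0) = G ` {1..r+1}" using hsk_inv[of 0 f r] by simp
  have m: "G 1 \<in> set (hsk r f 0)" "G j \<in> set (hsk r f 0)" "G (r+1) \<in> set (hsk r f 0)" using s j by auto
  have i1: "idx (hsk r f 0) (G 1) = r" "idx (hsk r f 0) (G (r+1)) = 0" "idx (hsk r f 0) (G j) = r + 1 - j"
    using idx_init[of 1 r f] idx_init[of "r+1" r f] idx_init[OF j] by auto
  show "\<not> idx (hsk r f m) (G 1) < idx (hsk r f m) (G j)"
    using hsk_order[OF Fm _ m(1) m(2)] i1 j by auto
  show "\<not> idx (hsk r f m) (G j) < idx (hsk r f m) (G (r+1))"
    using hsk_order[OF Fm _ m(2) m(3)] i1 j by auto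
qed


lemma core_alpha:
  assumes F: "\<forall>i\<in>{1..m}. 0 < f i \<and> f i \<le> i + r + 1" and i: "i \<in> {1..m}"
  defines "H \<equiv> hsk r f m"
  shows "(idx H (G 1) < idx H (X i) \<and> (\<forall>l. 1 \<le> l \<and> l < i \<longrightarrow> idx H (G 1) < idx H (X l) \<longrightarrow> idx H (X l) < idx H (X i)))
     \<longleftrightarrow> f i = i + r + 1"
proof -
  define K where "K = hsk r f (i - 1)"
  define K' where "K' = hsk r f i"
  note S = stage_facts[OF F i, folded K_def K'_def H_def]
  have G1: "G 1 \<in> set K" using S(2) by auto
  have XK: "\<And>l. 1 \<le> l \<Longrightarrow> l < i \<Longrightarrow> X l \<in> set K" using S(2) by auto
  have XiK': "X i \<in> set K'" using S(8) by auto
  have tr: "\<And>a. a \<in> set K \<Longrightarrow> (idx H a < idx H (X i)) = (idx K' a < idx K' (X i))"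
    using S(7) S(8) by auto
  have tr2: "\<And>a. a \<in> set K \<Longrightarrow> (idx H (X i) < idx H a) = (idx K' (X i) < idx K' a)"
    using S(7) S(8) by auto
  show ?thesis
  proof
    assume f: "f i = i + r + 1"
    then have p: "f i - 1 = length K" using S(3) i by auto
    have below: "\<And>a. a \<in> set K \<Longrightarrow> idx H a < idx H (X i)"
    proof -
      fix a assume a: "a \<in> set K"
      have "idx K a < length K" using idx_less[OF a] .
      then show "idx H a < idx H (X i)" using tr[OF a] S(6)[OF a] S(4) p by auto
    qed
    show "idx H (G 1) < idx H (X i) \<and> (\<forall>l. 1 \<le> l \<and> l < i \<longrightarrow> idx H (G 1) < idx H (X l) \<longrightarrow> idx H (X l) < idx H (X i))"
      using below G1 XK by auto
  next
    assume A: "idx H (G 1) < idx H (X i) \<and> (\<forall>l. 1 \<le> l \<and> l < i \<longrightarrow> idx H (G 1) < idx H (X l) \<longrightarrow> idx H (X l) < idx H (X i))"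
    show "f i = i + r + 1"
    proof (rule ccontr)
      assume ne: "f i \<noteq> i + r + 1"
      have "f i \<le> i + r + 1" "0 < f i" using F i by auto
      then have p: "f i - 1 < length K" using ne S(3) by auto
      define y where "y = K ! (f i - 1)"
      have y: "y \<in> set K" unfolding y_def using p by simp
      have iy: "idx K y = f i - 1" unfolding y_def using idx_nth[OF S(1) p] .
      have "idx K' y = Suc (f i - 1)" using S(6)[OF y] iy by simp
      then have above: "idx H (X i) < idx H y" using tr2[OF y] S(4) by simp
      from y S(2) have "y \<in> G ` {1..r+1} \<or> y \<in> X ` {1..i-1}" by auto
      then show False
      proof
        assume "y \<in> G ` {1..r+1}"
        then obtain j where j: "j \<in> {1..r+1}" "y = G j" by auto
        have "\<not> idx H (G 1) < idx H (G j)" using G_bounds(1)[OF F j(1)] unfolding H_def .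
        then show False using A above j by auto
      next
        assume "y \<in> X ` {1..i-1}"
        then obtain l where l: "1 \<le> l" "l < i" "y = X l" using i by fastforce
        then show False using A above by force
      qed
    qed
  qed
qed

lemma core_beta:
  assumes F: "\<forall>i\<in>{1..m}. 0 < f i \<and> f i \<le> i + r + 1" and i: "i \<in> {1..m}"
  defines "H \<equiv> hsk r f m"
  shows "(idx H (X i) < idx H (G (r+1)) \<and> (\<forall>l. 1 \<le> l \<and> l < i \<longrightarrow> idx H (X l) < idx H (G (r+1)) \<longrightarrow> idx H (X i) < idx H (X l)))
     \<longleftrightarrow> f i = 1"
proof -
  define K where "K = hsk r f (i - 1)"
  define K' where "K' = hsk r f i"
  note S = stage_facts[OF F i, folded K_def K'_def H_def]
  have G1: "G (r+1) \<in> set K" using S(2) by auto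
  have XK: "\<And>l. 1 \<le> l \<Longrightarrow> l < i \<Longrightarrow> X l \<in> set K" using S(2) by auto
  have tr: "\<And>a. a \<in> set K \<Longrightarrow> (idx H a < idx H (X i)) = (idx K' a < idx K' (X i))"
    using S(7) S(8) by auto
  have tr2: "\<And>a. a \<in> set K \<Longrightarrow> (idx H (X i) < idx H a) = (idx K' (X i) < idx K' a)"
    using S(7) S(8) by auto
  show ?thesis
  proof
    assume f: "f i = 1"
    have above: "\<And>a. a \<in> set K \<Longrightarrow> idx H (X i) < idx H a"
      using tr2 S(6) S(4) f by auto
    show "idx H (X i) < idx H (G (r+1)) \<and> (\<forall>l. 1 \<le> l \<and> l < i \<longrightarrow> idx H (X l) < idx H (G (r+1)) \<longrightarrow> idx H (X i) < idx H (X l))"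
      using above G1 XK by auto
  next
    assume A: "idx H (X i) < idx H (G (r+1)) \<and> (\<forall>l. 1 \<le> l \<and> l < i \<longrightarrow> idx H (X l) < idx H (G (r+1)) \<longrightarrow> idx H (X i) < idx H (X l))"
    show "f i = 1"
    proof (rule ccontr)
      assume ne: "f i \<noteq> 1"
      have "0 < f i" using F i by auto
      then have p0: "0 < f i - 1" using ne by auto
      then have p: "f i - 2 < length K" using S(5) by auto
      define y where "y = K ! (f i - 2)"
      have y: "y \<in> set K" unfolding y_def using p by simp
      have iy: "idx K y = f i - 2" unfolding y_def using idx_nth[OF S(1) p] .
      have "idx K' y = f i - 2" using S(6)[OF y] iy p0 by simp
      then have below: "idx H y < idx H (X i)" using tr[OF y] S(4) p0 by simp
      from y S(2) have "y \<in> G ` {1..r+1} \<or> y \<in> X ` {1..i-1}" by auto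
      then show False
      proof
        assume "y \<in> G ` {1..r+1}"
        then obtain j where j: "j \<in> {1..r+1}" "y = G j" by auto
        have "\<not> idx H (G j) < idx H (G (r+1))" using G_bounds(2)[OF F j(1)] unfolding H_def .
        then show False using A below j by auto
      next
        assume "y \<in> X ` {1..i-1}"
        then obtain l where l: "1 \<le> l" "l < i" "y = X l" using i by fastforce
        then show False using A below by force
      qed
    qed
  qed
qed


lemma ltr_upt: "ltr R P (map g [1..<k+1]) = g ` {i\<in>{1..k}. P (g i) \<and> (\<forall>l. 1 \<le> l \<and> l < i \<longrightarrow> P (g l) \<longrightarrow> R (g l) (g i))}"
proof (induction k)
  case 0 then show ?case by simp
next
  case (Suc k)
  have e: "map g [1..<Suc k + 1] = map g [1..<k+1] @ [g (Suc k)]" by simp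
  have s: "set (map g [1..<k+1]) = g ` {1..k}" by auto
  have c: "(\<forall>z\<in>g ` {1..k}. P z \<longrightarrow> R z (g (Suc k))) = (\<forall>l. 1 \<le> l \<and> l < Suc k \<longrightarrow> P (g l) \<longrightarrow> R (g l) (g (Suc k)))"
    by auto
  have d: "{i\<in>{1..Suc k}. P (g i) \<and> (\<forall>l. 1 \<le> l \<and> l < i \<longrightarrow> P (g l) \<longrightarrow> R (g l) (g i))}
     = {i\<in>{1..k}. P (g i) \<and> (\<forall>l. 1 \<le> l \<and> l < i \<longrightarrow> P (g l) \<longrightarrow> R (g l) (g i))}
       \<union> (if P (g (Suc k)) \<and> (\<forall>l. 1 \<le> l \<and> l < Suc k \<longrightarrow> P (g l) \<longrightarrow> R (g l) (g (Suc k))) then {Suc k} else {})"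
    by (auto simp: le_Suc_eq)
  show ?case unfolding e ltr_snoc s c Suc d by auto
qed

lemma ltr_dropG: "(\<forall>y\<in>set w. \<not> is_X y \<longrightarrow> \<not> P (v y)) \<Longrightarrow> ltr R P (map v w) = ltr R P (map v (filter is_X w))"
  by (induction w) (auto simp: ltr_Cons)

lemma item_cases: "\<not> is_X y \<Longrightarrow> is_G y"
  by (cases y) (auto simp: is_X_def is_G_def)


theorem mainTheorem2:
  fixes n r :: nat and f :: "nat \<Rightarrow> nat" and w :: "item list"
  assumes "r \<le> n"
    and "trunc_subexc n r f"
    and "admissible n r w"
  shows "card (lrs (rho (insertion_assemblee n r f w))) = card {i\<in>{1..n-r}. f i = i + r + 1}
       \<and> card (rls (rho (insertion_assemblee n r f w))) = card {i\<in>{1..n-r}. f i = 1}"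
proof -
  define m where "m = n - r"
  have F: "\<forall>i\<in>{1..m}. 0 < f i \<and> f i \<le> i + r + 1" using assms(2) unfolding trunc_subexc_def m_def by auto
  define H where "H = hsk r f m"
  define v where "v = item_val n r f"
  have vdef: "\<And>it. v it = idx H it + 1" unfolding v_def H_def item_val_def height_hsk m_def ..
  define B where "B = cut_blocks [] is_G w"
  define A where "A = insertion_assemblee n r f w"
  have AB: "A = map (map v) B" unfolding A_def B_def insertion_assemblee_def v_def ..
  have wX: "filter is_X w = map X [1..<m+1]" and wG: "filter is_G w = map G [1..<r+2]"
    and wne: "w \<noteq> []" and wl: "last w = G (r+1)"
    using assms(3) unfolding admissible_def m_def by auto
  have Finv: "\<forall>i\<in>{1..m}. f i \<le> i + r + 1" using F by auto
  note Hinv = hsk_inv[OF Finv, folded H_def]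
  have Bc: "concat B = w" unfolding B_def using cb_concat[of "[]"] by simp
  have Bne: "B \<noteq> []" unfolding B_def using cb_ne wne by auto
  have Bbl: "\<forall>b\<in>set B. b \<noteq> []" unfolding B_def by (rule cb_nonempty)
  have hG: "hd (filter is_G w) = G 1" unfolding wG by (simp add: upt_conv_Cons del: upt_Suc)
  have fGne: "filter is_G w \<noteq> []" unfolding wG by simp
  have "hd (filter is_G w) \<in> set (filter is_G w)" using hd_in_set[OF fGne] .
  then have exG: "\<exists>y\<in>set w. is_G y" by auto
  have lhB: "last (hd B) = G 1" unfolding B_def using cb_hd[OF exG] hG by simp
  have llB: "last (last B) = G (r+1)" unfolding B_def using cb_last[OF wne] wl by (simp add: is_G_def)
  define W where "W = concat A"
  have Wv: "W = map v w" unfolding W_def AB using Bc by (simp add: map_concat[symmetric])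
  have Ane: "A \<noteq> []" and Abl: "\<forall>b\<in>set A. b \<noteq> []" using Bne Bbl unfolding AB by auto
  define b1 where "b1 = first_end A"
  define br where "br = last_end A"
  have b1v: "b1 = v (G 1)" unfolding b1_def first_end_def AB using Bne Bbl lhB
    by (simp add: hd_map last_map)
  have brv: "br = v (G (r+1))" unfolding br_def last_end_def AB using Bne Bbl llB
    by (simp add: last_map)
  have G1r: "\<not> idx H (G 1) < idx H (G (r+1))" using G_bounds(2)[OF F, of 1] unfolding H_def by simp
  have brb1: "br \<le> b1" unfolding brv b1v vdef using G1r by simp
  have W0: "0 \<notin> set W" unfolding Wv vdef by auto
  define ra where "ra = rev (filter (\<lambda>x. b1 < x) W)"
  define RW where "RW = rho_word ra b1 br W"
  have rhoA: "rho A = split_lens (map length A) RW" unfolding rho_def RW_def ra_def b1_def br_def W_def Let_def ..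
  have lenRW: "length RW = sum_list (map length A)" unfolding RW_def rw_length W_def by (simp add: length_concat)
  have cR: "concat (rho A) = RW" unfolding rhoA using sl_concat[OF lenRW] .
  have lR: "map length (rho A) = map length A" unfolding rhoA using sl_lens[OF lenRW] .
  have Rne: "rho A \<noteq> []" using lR Ane by auto
  have hdl: "length (hd (rho A)) = length (hd A)"
    using arg_cong[OF lR, of hd] Rne Ane by (simp add: hd_map)
  have lal: "length (last (rho A)) = length (last A)"
    using arg_cong[OF lR, of last] Rne Ane by (simp add: last_map)
  have hA: "hd A \<noteq> []" "last A \<noteq> []" using Ane Abl by auto
  have hR: "hd (rho A) \<noteq> []" "last (rho A) \<noteq> []" using hA hdl lal by auto
  have lenW: "length W = length RW" unfolding RW_def rw_length ..
  have "0 < length (hd A)" using hA by simp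
  moreover have "length (hd A) \<le> length W" unfolding W_def using Ane by (cases A) auto
  ultimately have hdlen: "length (hd A) - 1 < length W" by arith
  have Wb1: "W ! (length (hd A) - 1) = b1" unfolding b1_def first_end_def W_def
    using last_hd_concat[OF Ane hA(1)] by simp
  have fe: "first_end (rho A) = b1"
  proof -
    have "first_end (rho A) = RW ! (length (hd A) - 1)"
      unfolding first_end_def using last_hd_concat[OF Rne hR(1)] cR hdl by simp
    also have "\<dots> = W ! (length (hd A) - 1)" unfolding RW_def
      by (rule rw_nth[OF hdlen]) (use Wb1 brb1 in auto)
    finally show ?thesis using Wb1 by simp
  qed
  have Wne: "W \<noteq> []" unfolding Wv using wne by simp
  have Wbr: "last W = br" unfolding br_def last_end_def W_def
    using last_last_concat[OF Ane hA(2)] by simp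
  have le: "last_end (rho A) = br"
  proof -
    have "last_end (rho A) = last RW"
      unfolding last_end_def using last_last_concat[OF Rne hR(2)] cR by simp
    also have "\<dots> = RW ! (length W - 1)" using Wne lenW by (metis last_conv_nth length_0_conv)
    also have "\<dots> = W ! (length W - 1)" unfolding RW_def
      by (rule rw_nth) (use Wne Wbr brb1 in \<open>auto simp: last_conv_nth\<close>)
    finally show ?thesis using Wbr Wne by (simp add: last_conv_nth)
  qed
  have raP: "\<forall>z\<in>set ra. b1 < z" unfolding ra_def by auto
  have raL: "length ra = length (filter (\<lambda>x. b1 < x) W)" unfolding ra_def by simp
  define g where "g = (\<lambda>i. v (X i))"
  have XH: "\<And>i. i \<in> {1..m} \<Longrightarrow> X i \<in> set H" using Hinv by auto
  have ginj: "inj_on g {1..m}"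
  proof (rule inj_onI)
    fix i j assume i: "i \<in> {1..m}" and j: "j \<in> {1..m}" and e: "g i = g j"
    then have "idx H (X i) = idx H (X j)" unfolding g_def vdef by simp
    then have "X i = X j" using idx_inj XH i j by metis
    then show "i = j" by simp
  qed
  have WX: "\<And>R P. (\<forall>j\<in>{1..r+1}. \<not> P (v (G j))) \<Longrightarrow> ltr R P W = ltr R P (map g [1..<m+1])"
  proof -
    fix R P assume a: "\<forall>j\<in>{1..r+1}. \<not> P (v (G j))"
    have "\<forall>y\<in>set w. \<not> is_X y \<longrightarrow> \<not> P (v y)"
    proof (intro ballI impI)
      fix y assume y: "y \<in> set w" "\<not> is_X y"
      then have "y \<in> set (filter is_G w)" using item_cases by auto
      then obtain j where "j \<in> {1..r+1}" "y = G j" unfolding wG by auto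
      then show "\<not> P (v y)" using a by auto
    qed
    then have "ltr R P (map v w) = ltr R P (map v (filter is_X w))" by (rule ltr_dropG)
    also have "map v (filter is_X w) = map g [1..<m+1]" unfolding wX g_def by simp
    finally show "ltr R P W = ltr R P (map g [1..<m+1])" unfolding Wv .
  qed
  define Ta where "Ta = {i\<in>{1..m}. f i = i + r + 1}"
  have lrsA: "lrs (rho A) = g ` Ta"
  proof -
    have "lrs (rho A) = rtl (<) (\<lambda>x. b1 < x) RW"
      unfolding lrs_def rtl_def Let_def fe cR ..
    also have "\<dots> = rtl (<) (\<lambda>x. b1 < x) (filter (\<lambda>x. b1 < x) RW)" by (simp add: rtl_filter)
    also have "\<dots> = rtl (<) (\<lambda>x. b1 < x) ra" unfolding RW_def using rw_big[OF raL raP brb1] by simp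
    also have "\<dots> = ltr (<) (\<lambda>x. b1 < x) W" unfolding ra_def rtl_rev ltr_filter ..
    also have "\<dots> = ltr (<) (\<lambda>x. b1 < x) (map g [1..<m+1])"
      by (rule WX) (use G_bounds(1)[OF F] in \<open>auto simp: b1v vdef H_def\<close>)
    also have "\<dots> = g ` Ta" unfolding ltr_upt Ta_def
    proof (rule image_cong[OF _ refl], rule Collect_cong)
      fix i show "(i \<in> {1..m} \<and> b1 < g i \<and> (\<forall>l. 1 \<le> l \<and> l < i \<longrightarrow> b1 < g l \<longrightarrow> g l < g i)) = (i \<in> {1..m} \<and> f i = i + r + 1)"
        using core_alpha[OF F, of i] unfolding H_def[symmetric] g_def b1v vdef by auto
    qed
    finally show ?thesis .
  qed
  define Tb where "Tb = {i\<in>{1..m}. f i = 1}"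
  define h where "h = (\<lambda>x::nat. br - x)"
  have Wpos: "\<And>x. x \<in> set W \<Longrightarrow> 0 < x" using W0 by (metis gr0I)
  have rlsA: "rls (rho A) = h ` g ` Tb"
  proof -
    have "rls (rho A) = ltr (<) (\<lambda>x. x < br) RW"
      unfolding rls_def ltr_def Let_def le cR ..
    also have "\<dots> = ltr (<) (\<lambda>x. x < br) (filter (\<lambda>x. x < br) RW)" by (simp add: ltr_filter)
    also have "\<dots> = ltr (<) (\<lambda>x. x < br) (map h (filter (\<lambda>x. x < br) W))"
      unfolding RW_def h_def using rw_small[OF raL raP brb1 W0] by simp
    also have "\<dots> = h ` ltr (\<lambda>a b. h a < h b) (\<lambda>a. h a < br) (filter (\<lambda>x. x < br) W)"
      by (rule ltr_map)
    also have "\<dots> = h ` ltr (\<lambda>a b. b < a) (\<lambda>x. x < br) (filter (\<lambda>x. x < br) W)"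
      by (rule arg_cong[where f="image h"], rule ltr_cong) (auto simp: h_def dest: Wpos)
    also have "\<dots> = h ` ltr (\<lambda>a b. b < a) (\<lambda>x. x < br) W" by (simp add: ltr_filter)
    also have "\<dots> = h ` ltr (\<lambda>a b. b < a) (\<lambda>x. x < br) (map g [1..<m+1])"
      by (rule arg_cong[where f="image h"], rule WX) (use G_bounds(2)[OF F] in \<open>auto simp: brv vdef H_def\<close>)
    also have "\<dots> = h ` g ` Tb" unfolding ltr_upt Tb_def
    proof (rule arg_cong[where f="image h"], rule image_cong[OF _ refl], rule Collect_cong)
      fix i show "(i \<in> {1..m} \<and> g i < br \<and> (\<forall>l. 1 \<le> l \<and> l < i \<longrightarrow> g l < br \<longrightarrow> g i < g l)) = (i \<in> {1..m} \<and> f i = 1)"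
        using core_beta[OF F, of i] unfolding H_def[symmetric] g_def brv vdef by auto
    qed
    finally show ?thesis .
  qed
  have c1: "card (lrs (rho A)) = card Ta"
    unfolding lrsA by (rule card_image, rule inj_on_subset[OF ginj]) (auto simp: Ta_def)
  have gb: "\<And>i. i \<in> Tb \<Longrightarrow> g i < br"
    using core_beta[OF F] unfolding H_def[symmetric] g_def brv vdef Tb_def by auto
  have hinj: "inj_on h (g ` Tb)"
  proof (rule inj_onI)
    fix x y assume "x \<in> g ` Tb" "y \<in> g ` Tb" "h x = h y"
    moreover from this have "x < br" "y < br" using gb by auto
    ultimately show "x = y" unfolding h_def by simp
  qed
  have c2: "card (rls (rho A)) = card Tb"
    unfolding rlsA card_image[OF hinj] by (rule card_image, rule inj_on_subset[OF ginj]) (auto simp: Tb_def)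
  show ?thesis using c1 c2 unfolding A_def Ta_def Tb_def m_def by simp
qed

end
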